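(* Let $\mathsf E$ be a non-trivial observable on $\mathcal H_S$. No $\mathsf E$-instrument implemented by a measurement scheme constrained by the third law is repeatable.
   Context: All Hilbert spaces are finite-dimensional and complex. A state is a positive operator of unit trace; it is full-rank if it is positive definite. A channel is a completely positive trace-preserving linear map. A channel is constrained by the third law if it maps every full-rank state on its input space to a full-rank state on its output space. Let $2\le\dim\mathcal H_S<\infty$. An observable is a finite family $\mathsf E=\{\mathsf E_x\}_{x\in\mathcal X}$ of nonzero operators with $0\le\mathsf E_x\le\mathbb 1$ and $\sum_x\mathsf E_x=\mathbb 1$. It is non-trivial if some $\mathsf E_x$ is not a multiple of $\mathbb 1$. An $\mathsf E$-instrument is a family $\{\mathcal I_x\}_{x\in\mathcal X}$ of completely positive maps on $\mathcal L(\mathcal H_S)$ with $\mathrm{tr}[\mathcal I_x(\rho)]=\mathrm{tr}[\mathsf E_x\rho]$ for all $x$ and all states $\rho$. A measurement scheme $(\mathcal H_A,\xi,\mathcal E,\mathsf Z)$ consists of: - a finite-dimensional $\mathcal H_A$; - a state $\xi$ on $\mathcal H_A$; - a channel $\mathcal E$ on $\mathcal L(\mathcal H_S\otimes\mathcal H_A)$; - positive operators $\{\mathsf Z_x\}_{x\in\mathcal X}$ on $\mathcal H_A$ summing to $\mathbb 1$. It implements $\mathcal I_x(\rho)=\mathrm{tr}_A[(\mathbb 1\otimes\mathsf Z_x)\mathcal E(\rho\otimes\xi)]$. It is constrained by the third law if $\xi$ is full-rank and $\mathcal E$ is constrained by the third law. An $\mathsf E$-instrument is repeatable if $\mathrm{tr}[\mathsf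 E_y\mathcal I_x(\rho)]=\delta_{x,y}\mathrm{tr}[\mathsf E_x\rho]$ for all outcomes $x,y$ and all states $\rho$. *)

theory Defs
  imports Complex_Main
begin

text \<open>Operators on a finite-dimensional Hilbert space with orthonormal basis indexed
  by the finite type 'n are represented as complex matrices 'n => 'n => complex.\<close>

type_synonym 'n op = "'n \<Rightarrow> 'n \<Rightarrow> complex"

definition idop :: "'n op" where
  "idop = (\<lambda>i j. if i = j then 1 else 0)"

definition trace :: "('n::finite) op \<Rightarrow> complex" where
  "trace A = (\<Sum>i\<in>UNIV. A i i)"

definition mmult :: "('n::finite) op \<Rightarrow> 'n op \<Rightarrow> 'n op" where
  "mmult A B = (\<lambda>i j. \<Sum>k\<in>UNIV. A i k * B k j)"

definition sesq :: "('n::finite \<Rightarrow> complex) \<Rightarrow> 'n op \<Rightarrow> ('n \<Rightarrow> complex) \<Rightarrow> complex" where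
  "sesq u A w = (\<Sum>i\<in>UNIV. \<Sum>j\<in>UNIV. cnj (u i) * A i j * w j)"

definition positive_op :: "('n::finite) op \<Rightarrow> bool" where
  "positive_op A \<longleftrightarrow> (\<forall>v. Im (sesq v A v) = 0 \<and> 0 \<le> Re (sesq v A v))"

definition posdef_op :: "('n::finite) op \<Rightarrow> bool" where
  "posdef_op A \<longleftrightarrow> positive_op A \<and> (\<forall>v. v \<noteq> (\<lambda>_. 0) \<longrightarrow> 0 < Re (sesq v A v))"

definition is_state :: "('n::finite) op \<Rightarrow> bool" where
  "is_state \<rho> \<longleftrightarrow> positive_op \<rho> \<and> trace \<rho> = 1"

definition full_rank_state :: "('n::finite) op \<Rightarrow> bool" where
  "full_rank_state \<rho> \<longleftrightarrow> is_state \<rho> \<and> posdef_op \<rho>"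

definition clinear_map :: "('a op \<Rightarrow> 'b op) \<Rightarrow> bool" where
  "clinear_map \<Phi> \<longleftrightarrow> (\<forall>A B c. \<Phi> (\<lambda>i j. c * A i j + B i j) = (\<lambda>i j. c * \<Phi> A i j + \<Phi> B i j))"

text \<open>A k x k block matrix with blocks M p q (p, q < k) is positive, i.e. positivity
  on the space C^k tensor H.\<close>
definition block_positive :: "nat \<Rightarrow> (nat \<Rightarrow> nat \<Rightarrow> ('n::finite) op) \<Rightarrow> bool" where
  "block_positive k M \<longleftrightarrow>
     (\<forall>v :: nat \<Rightarrow> 'n \<Rightarrow> complex.
        Im (\<Sum>p<k. \<Sum>q<k. sesq (v p) (M p q) (v q)) = 0 \<and>
        0 \<le> Re (\<Sum>p<k. \<Sum>q<k. sesq (v p) (M p q) (v q)))"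

text \<open>completely positive: linear and id_k tensor Phi is positive for every k\<close>
definition cp_map :: "(('a::finite) op \<Rightarrow> ('b::finite) op) \<Rightarrow> bool" where
  "cp_map \<Phi> \<longleftrightarrow> clinear_map \<Phi> \<and>
     (\<forall>k M. block_positive k M \<longrightarrow> block_positive k (\<lambda>p q. \<Phi> (M p q)))"

definition channel :: "(('a::finite) op \<Rightarrow> ('b::finite) op) \<Rightarrow> bool" where
  "channel \<Phi> \<longleftrightarrow> cp_map \<Phi> \<and> (\<forall>A. trace (\<Phi> A) = trace A)"

definition third_law_channel :: "(('a::finite) op \<Rightarrow> ('b::finite) op) \<Rightarrow> bool" where
  "third_law_channel \<Phi> \<longleftrightarrow> channel \<Phi> \<and> (\<forall>\<rho>. full_rank_state \<rho> \<longrightarrow> full_rank_state (\<Phi> \<rho>))"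

definition observable :: "('x::finite \<Rightarrow> ('n::finite) op) \<Rightarrow> bool" where
  "observable E \<longleftrightarrow>
     (\<forall>x. E x \<noteq> (\<lambda>_ _. 0) \<and> positive_op (E x) \<and> positive_op (\<lambda>i j. idop i j - E x i j)) \<and>
     (\<lambda>i j. \<Sum>x\<in>UNIV. E x i j) = idop"

definition nontrivial_observable :: "('x::finite \<Rightarrow> ('n::finite) op) \<Rightarrow> bool" where
  "nontrivial_observable E \<longleftrightarrow> (\<exists>x. \<not> (\<exists>c. E x = (\<lambda>i j. c * idop i j)))"

definition E_instrument :: "('x::finite \<Rightarrow> ('n::finite) op) \<Rightarrow> ('x \<Rightarrow> 'n op \<Rightarrow> 'n op) \<Rightarrow> bool" where
  "E_instrument E I \<longleftrightarrow> (\<forall>x. cp_map (I x)) \<and>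
     (\<forall>x \<rho>. is_state \<rho> \<longrightarrow> trace (I x \<rho>) = trace (mmult (E x) \<rho>))"

definition repeatable :: "('x::finite \<Rightarrow> ('n::finite) op) \<Rightarrow> ('x \<Rightarrow> 'n op \<Rightarrow> 'n op) \<Rightarrow> bool" where
  "repeatable E I \<longleftrightarrow> (\<forall>x y \<rho>. is_state \<rho> \<longrightarrow>
     trace (mmult (E y) (I x \<rho>)) = (if x = y then trace (mmult (E x) \<rho>) else 0))"

definition tensor_op :: "'s op \<Rightarrow> 'a op \<Rightarrow> ('s \<times> 'a) op" where
  "tensor_op A B = (\<lambda>(i, a) (j, b). A i j * B a b)"

definition ptrace_A :: "('s \<times> ('a::finite)) op \<Rightarrow> 's op" where
  "ptrace_A X = (\<lambda>i j. \<Sum>a\<in>UNIV. X (i, a) (j, a))"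

definition measurement_scheme ::
  "('a::finite) op \<Rightarrow> ((('s::finite) \<times> 'a) op \<Rightarrow> ('s \<times> 'a) op) \<Rightarrow> ('x::finite \<Rightarrow> 'a op) \<Rightarrow> bool" where
  "measurement_scheme \<xi> Ech Z \<longleftrightarrow> is_state \<xi> \<and> channel Ech \<and>
     (\<forall>x. positive_op (Z x)) \<and> (\<lambda>i j. \<Sum>x\<in>UNIV. Z x i j) = idop"

definition third_law_scheme ::
  "('a::finite) op \<Rightarrow> ((('s::finite) \<times> 'a) op \<Rightarrow> ('s \<times> 'a) op) \<Rightarrow> ('x::finite \<Rightarrow> 'a op) \<Rightarrow> bool" where
  "third_law_scheme \<xi> Ech Z \<longleftrightarrow> measurement_scheme \<xi> Ech Z \<and>
     full_rank_state \<xi> \<and> third_law_channel Ech"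

definition implemented_instrument ::
  "('a::finite) op \<Rightarrow> ((('s::finite) \<times> 'a) op \<Rightarrow> ('s \<times> 'a) op) \<Rightarrow> ('x::finite \<Rightarrow> 'a op)
     \<Rightarrow> 'x \<Rightarrow> 's op \<Rightarrow> 's op" where
  "implemented_instrument \<xi> Ech Z x \<rho> =
     ptrace_A (mmult (tensor_op idop (Z x)) (Ech (tensor_op \<rho> \<xi>)))"

end

theory Submission
  imports Defs
begin


lemma sesq_add_left: "sesq (\<lambda>i. u i + u' i) A w = sesq u A w + sesq u' A w"
  unfolding sesq_def by (simp add: ring_distribs sum.distrib)

lemma sesq_add_right: "sesq u A (\<lambda>i. w i + w' i) = sesq u A w + sesq u A w'"
  unfolding sesq_def by (simp add: ring_distribs sum.distrib)

lemma sesq_delta_left: "sesq (\<lambda>i. if i = s then t else 0) A w = cnj t * (\<Sum>j\<in>UNIV. A s j * w j)"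
proof -
  have "sesq (\<lambda>i. if i = s then t else 0) A w = (\<Sum>i\<in>UNIV. if i = s then cnj t * (\<Sum>j\<in>UNIV. A s j * w j) else 0)"
    unfolding sesq_def by (rule sum.cong) (auto simp: sum_distrib_left mult.assoc)
  then show ?thesis by simp
qed

lemma sesq_delta_right: "sesq u A (\<lambda>j. if j = s then t else 0) = (\<Sum>i\<in>UNIV. cnj (u i) * A i s) * t"
proof -
  have "sesq u A (\<lambda>j. if j = s then t else 0) = (\<Sum>i\<in>UNIV. cnj (u i) * A i s * t)"
    unfolding sesq_def by (rule sum.cong) (auto simp: if_distrib cong: if_cong)
  then show ?thesis by (simp add: sum_distrib_right)
qed

lemma sesq_delta_both: "sesq (\<lambda>i. if i = s then t else 0) A (\<lambda>j. if j = r then t' else 0) = cnj t * A s r * t'"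
  by (simp add: sesq_delta_left if_distrib cong: if_cong)

lemma pos_diag: assumes "positive_op A" shows "Im (A i i) = 0" "0 \<le> Re (A i i)"
proof -
  have "sesq (\<lambda>k. if k = i then 1 else 0) A (\<lambda>k. if k = i then 1 else 0) = A i i"
    by (simp add: sesq_delta_both)
  with assms show "Im (A i i) = 0" "0 \<le> Re (A i i)" unfolding positive_op_def by metis+
qed

lemma pos_herm: assumes "positive_op A" shows "A j i = cnj (A i j)"
proof (cases "i = j")
  case True then show ?thesis using pos_diag[OF assms, of i] by (simp add: complex_eq_iff)
next
  case False
  define q where "q t = sesq (\<lambda>k. (if k = i then 1 else 0) + (if k = j then t else 0)) A (\<lambda>k. (if k = i then 1 else 0) + (if k = j then t else 0))" for t
  have q: "q t = A i i + A i j * t + cnj t * A j i + cnj t * A j j * t" for t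
    unfolding q_def by (simp add: sesq_add_left sesq_add_right sesq_delta_both)
  have "Im (q 1) = 0" "Im (q \<i>) = 0" using assms unfolding positive_op_def q_def by blast+
  then show ?thesis using pos_diag[OF assms, of i] pos_diag[OF assms, of j]
    by (auto simp: q complex_eq_iff)
qed

lemma quad_shift:
  assumes "positive_op A"
  shows "sesq (\<lambda>i. v i + (if i = s then t else 0)) A (\<lambda>i. v i + (if i = s then t else 0))
     = sesq v A v + cnj t * cnj (\<Sum>i\<in>UNIV. cnj (v i) * A i s) + t * (\<Sum>i\<in>UNIV. cnj (v i) * A i s) + cnj t * t * A s s"
proof -
  have "(\<Sum>j\<in>UNIV. A s j * v j) = cnj (\<Sum>i\<in>UNIV. cnj (v i) * A i s)"
    by (simp add: pos_herm[OF assms, of _ s] mult.commute)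
  then show ?thesis
    by (simp add: sesq_add_left sesq_add_right sesq_delta_both sesq_delta_left sesq_delta_right algebra_simps)
qed

lemma zero_col:
  assumes "positive_op A" "A s s = 0"
  shows "A i s = 0"
proof (rule ccontr)
  assume b0: "A i s \<noteq> 0"
  define b where "b = A i s"
  define v where "v = (\<lambda>k::'a. if k = i then (1::complex) else 0)"
  have vb: "(\<Sum>k\<in>UNIV. cnj (v k) * A k s) = b"
  proof -
    have "(\<Sum>k\<in>UNIV. cnj (v k) * A k s) = (\<Sum>k\<in>UNIV. if k = i then A i s else 0)"
      unfolding v_def by (rule sum.cong) auto
    then show ?thesis unfolding b_def by simp
  qed
  have vv: "sesq v A v = A i i" unfolding v_def by (simp add: sesq_delta_both)
  define r where "r = (Re (A i i) + 1) / (2 * (cmod b)^2)"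
  have bpos: "0 < (cmod b)^2" using b0 b_def by simp
  define t where "t = - (of_real r) * cnj b"
  have e1: "cnj t * cnj b = - of_real (r * (cmod b)^2)"
    unfolding t_def by (simp add: complex_norm_square mult.commute) (metis complex_norm_square of_real_power mult.commute)
  have e2: "t * b = - of_real (r * (cmod b)^2)"
    unfolding t_def by (simp add: complex_norm_square mult.commute mult.left_commute) (metis complex_norm_square of_real_power)
  have "r * (cmod b)^2 = (Re (A i i) + 1) / 2" unfolding r_def using bpos by (simp add: field_simps)
  then have "Re (sesq (\<lambda>k. v k + (if k = s then t else 0)) A (\<lambda>k. v k + (if k = s then t else 0))) = -1"
    by (simp add: quad_shift[OF assms(1)] vb vv e1 e2 assms(2))
  with assms(1) show False unfolding positive_op_def by (metis neg_0_le_iff_le not_one_le_zero)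
qed

lemma sesq_diff_op: "sesq v (\<lambda>i j. A i j - B i j) v = sesq v A v - sesq v B v"
  unfolding sesq_def by (simp add: ring_distribs sum_subtractf)

lemma sesq_rank1: "sesq v (\<lambda>i j. x i * cnj (y j) * c) v = (\<Sum>i\<in>UNIV. cnj (v i) * x i) * cnj (\<Sum>j\<in>UNIV. cnj (v j) * y j) * c"
proof -
  have "cnj (\<Sum>j\<in>UNIV. cnj (v j) * y j) = (\<Sum>j\<in>UNIV. v j * cnj (y j))" by simp
  then have "(\<Sum>i\<in>UNIV. cnj (v i) * x i) * cnj (\<Sum>j\<in>UNIV. cnj (v j) * y j) * c
     = (\<Sum>i\<in>UNIV. cnj (v i) * x i) * (\<Sum>j\<in>UNIV. v j * cnj (y j)) * c" by simp
  also have "\<dots> = (\<Sum>i\<in>UNIV. \<Sum>j\<in>UNIV. cnj (v i) * x i * (v j * cnj (y j)) * c)"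
    by (simp add: sum_distrib_left sum_distrib_right) (rule sum.swap)
  also have "\<dots> = sesq v (\<lambda>i j. x i * cnj (y j) * c) v"
    unfolding sesq_def by (intro sum.cong refl) (simp only: mult_ac)
  finally show ?thesis by simp
qed

lemma pos_step:
  assumes "positive_op A" "0 < a" "A s s = of_real a"
  shows "positive_op (\<lambda>i j. A i j - A i s * cnj (A j s) * of_real (1 / a))"
  unfolding positive_op_def
proof
  fix v
  define b where "b = (\<Sum>i\<in>UNIV. cnj (v i) * A i s)"
  define t where "t = - cnj b / of_real a"
  have 1: "sesq v (\<lambda>i j. A i j - A i s * cnj (A j s) * of_real (1 / a)) v = sesq v A v - b * cnj b / of_real a"
    by (simp add: sesq_diff_op sesq_rank1 b_def divide_inverse)
  have 2: "sesq (\<lambda>i. v i + (if i = s then t else 0)) A (\<lambda>i. v i + (if i = s then t else 0)) = sesq v A v - b * cnj b / of_real a"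
    unfolding quad_shift[OF assms(1)] b_def[symmetric] assms(3) t_def using assms(2)
    by (simp add: field_simps)
  show "Im (sesq v (\<lambda>i j. A i j - A i s * cnj (A j s) * complex_of_real (1 / a)) v) = 0 \<and>
         0 \<le> Re (sesq v (\<lambda>i j. A i j - A i s * cnj (A j s) * complex_of_real (1 / a)) v)"
    using assms(1) unfolding 1 2[symmetric] positive_op_def by blast
qed

lemma decomp_aux:
  fixes S :: "'n::finite set"
  assumes "finite S"
  shows "\<forall>A::'n op. positive_op A \<and> (\<forall>i j. i \<notin> S \<or> j \<notin> S \<longrightarrow> A i j = 0) \<longrightarrow>
           (\<exists>V::'n \<Rightarrow> 'n \<Rightarrow> complex. A = (\<lambda>i j. \<Sum>k\<in>S. V k i * cnj (V k j)))"
  using assms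
proof (induction S rule: finite_induct)
  case empty
  show ?case
  proof (intro allI impI)
    fix A :: "'n op"
    assume "positive_op A \<and> (\<forall>i j. i \<notin> {} \<or> j \<notin> {} \<longrightarrow> A i j = 0)"
    then have "A = (\<lambda>i j. 0)" by (simp add: fun_eq_iff)
    then show "\<exists>V::'n \<Rightarrow> 'n \<Rightarrow> complex. A = (\<lambda>i j. \<Sum>k\<in>{}. V k i * cnj (V k j))" by simp
  qed
next
  case (insert x F)
  show ?case
  proof (intro allI impI, elim conjE)
    fix A :: "'n op"
    assume pA: "positive_op A" and out: "\<forall>i j. i \<notin> insert x F \<or> j \<notin> insert x F \<longrightarrow> A i j = 0"
    define a where "a = Re (A x x)"
    have Axx: "A x x = of_real a" using pos_diag[OF pA, of x] unfolding a_def by (simp add: complex_eq_iff)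
    have a0: "0 \<le> a" using pos_diag[OF pA, of x] unfolding a_def by simp
    define w where "w i = A i x / of_real (sqrt a)" for i
    define A' where "A' = (\<lambda>i j. A i j - A i x * cnj (A j x) * of_real (1 / a))"
    have ww: "w i * cnj (w j) = A i x * cnj (A j x) * of_real (1 / a)" for i j
    proof -
      have s: "complex_of_real (sqrt a) * complex_of_real (sqrt a) = complex_of_real a"
        using a0 by (simp flip: of_real_mult)
      have "w i * cnj (w j) = A i x * cnj (A j x) / (complex_of_real (sqrt a) * complex_of_real (sqrt a))"
        unfolding w_def by simp
      then show ?thesis unfolding s by (simp add: divide_inverse)
    qed
    show "\<exists>V. A = (\<lambda>i j. \<Sum>k\<in>insert x F. V k i * cnj (V k j))"
    proof (cases "a = 0")
      case True
      have col: "A i x = 0" for i using zero_col[OF pA] Axx True by simp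
      have row: "A x j = 0" for j using pos_herm[OF pA, of j x] col[of j] by simp
      have "\<forall>i j. i \<notin> F \<or> j \<notin> F \<longrightarrow> A i j = 0"
      proof (intro allI impI)
        fix i j assume "i \<notin> F \<or> j \<notin> F"
        then show "A i j = 0" using out col row by (cases "i = x"; cases "j = x") auto
      qed
      with insert.IH pA obtain V where V: "A = (\<lambda>i j. \<Sum>k\<in>F. V k i * cnj (V k j))" by blast
      show ?thesis
      proof (rule exI[of _ "V(x := (\<lambda>_. 0))"])
        show "A = (\<lambda>i j. \<Sum>k\<in>insert x F. (V(x := (\<lambda>_. 0))) k i * cnj ((V(x := (\<lambda>_. 0))) k j))"
        proof (intro ext)
          fix i j
          have c: "(\<Sum>k\<in>F. (V(x := (\<lambda>_. 0))) k i * cnj ((V(x := (\<lambda>_. 0))) k j)) = (\<Sum>k\<in>F. V k i * cnj (V k j))"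
            using insert.hyps by (intro sum.cong) auto
          have "(\<Sum>k\<in>insert x F. (V(x := (\<lambda>_. 0))) k i * cnj ((V(x := (\<lambda>_. 0))) k j)) = (\<Sum>k\<in>F. (V(x := (\<lambda>_. 0))) k i * cnj ((V(x := (\<lambda>_. 0))) k j))"
            using insert.hyps by (subst sum.insert) auto
          then show "A i j = (\<Sum>k\<in>insert x F. (V(x := (\<lambda>_. 0))) k i * cnj ((V(x := (\<lambda>_. 0))) k j))"
            unfolding c V by simp
        qed
      qed
    next
      case False
      then have apos: "0 < a" using a0 by simp
      have pA': "positive_op A'" unfolding A'_def by (rule pos_step[OF pA apos Axx])
      have k: "complex_of_real a * complex_of_real (1 / a) = 1"
        using apos by (simp flip: of_real_mult)
      have herm: "A x j = cnj (A j x)" for j using pos_herm[OF pA, of x j] .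
      have out': "\<forall>i j. i \<notin> F \<or> j \<notin> F \<longrightarrow> A' i j = 0"
      proof (intro allI impI)
        fix i j assume "i \<notin> F \<or> j \<notin> F"
        then consider "i \<notin> insert x F" | "j \<notin> insert x F" | "i = x" | "j = x" by blast
        then show "A' i j = 0"
        proof cases
          case 1 then show ?thesis using out unfolding A'_def by auto
        next
          case 2 then show ?thesis using out unfolding A'_def by auto
        next
          case 3
          have "A' x j = cnj (A j x) - cnj (A j x) * (complex_of_real a * complex_of_real (1 / a))"
            unfolding A'_def herm[of j] Axx by (simp only: mult_ac)
          then show ?thesis using 3 k by simp
        next
          case 4
          have "A' i x = A i x - A i x * (complex_of_real a * complex_of_real (1 / a))"
            unfolding A'_def Axx by (simp only: complex_cnj_complex_of_real mult_ac)
          then show ?thesis using 4 k by simp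
        qed
      qed
      with insert.IH pA' obtain V where V: "A' = (\<lambda>i j. \<Sum>k\<in>F. V k i * cnj (V k j))" by blast
      show ?thesis
      proof (rule exI[of _ "V(x := w)"])
        show "A = (\<lambda>i j. \<Sum>k\<in>insert x F. (V(x := w)) k i * cnj ((V(x := w)) k j))"
        proof (intro ext)
          fix i j
          have c: "(\<Sum>k\<in>F. (V(x := w)) k i * cnj ((V(x := w)) k j)) = (\<Sum>k\<in>F. V k i * cnj (V k j))"
            using insert.hyps by (intro sum.cong) auto
          have "(\<Sum>k\<in>insert x F. (V(x := w)) k i * cnj ((V(x := w)) k j)) = w i * cnj (w j) + (\<Sum>k\<in>F. (V(x := w)) k i * cnj ((V(x := w)) k j))"
            using insert.hyps by (subst sum.insert) auto
          also have "\<dots> = w i * cnj (w j) + A' i j" unfolding c V ..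
          also have "\<dots> = A i j" unfolding A'_def ww by simp
          finally show "A i j = (\<Sum>k\<in>insert x F. (V(x := w)) k i * cnj ((V(x := w)) k j))" by simp
        qed
      qed
    qed
  qed
qed

lemma decomp:
  fixes A :: "('n::finite) op"
  assumes "positive_op A"
  obtains V :: "'n \<Rightarrow> 'n \<Rightarrow> complex" where "A = (\<lambda>i j. \<Sum>k\<in>UNIV. V k i * cnj (V k j))"
proof -
  note h = spec[OF decomp_aux[OF finite_UNIV], of A]
  have "\<exists>V::'n \<Rightarrow> 'n \<Rightarrow> complex. A = (\<lambda>i j. \<Sum>k\<in>UNIV. V k i * cnj (V k j))"
    apply (rule mp[OF h])
    apply (rule conjI[OF assms])
    apply simp
    done
  then obtain V :: "'n \<Rightarrow> 'n \<Rightarrow> complex" where V: "A = (\<lambda>i j. \<Sum>k\<in>UNIV. V k i * cnj (V k j))" by (rule exE)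
  show ?thesis by (rule that[OF V])
qed



lemma sum_pairs: "(\<Sum>p\<in>(UNIV::('s::finite \<times> 'a::finite) set). f p) = (\<Sum>i\<in>UNIV. \<Sum>a\<in>UNIV. f (i, a))"
proof -
  have "(\<Sum>i\<in>UNIV. \<Sum>a\<in>UNIV. f (i, a)) = (\<Sum>(i,a)\<in>(UNIV::'s set) \<times> (UNIV::'a set). f (i, a))"
    by (rule sum.cartesian_product)
  then show ?thesis by (simp add: split_def)
qed

lemma sum3_swap: "(\<Sum>i\<in>A. \<Sum>j\<in>B. (\<Sum>k\<in>C. f k i j)) = (\<Sum>k\<in>C. \<Sum>i\<in>A. \<Sum>j\<in>B. f k i j)"
proof -
  have "(\<Sum>i\<in>A. \<Sum>j\<in>B. (\<Sum>k\<in>C. f k i j)) = (\<Sum>i\<in>A. \<Sum>k\<in>C. \<Sum>j\<in>B. f k i j)"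
    by (intro sum.cong refl) (rule sum.swap)
  also have "\<dots> = (\<Sum>k\<in>C. \<Sum>i\<in>A. \<Sum>j\<in>B. f k i j)" by (rule sum.swap)
  finally show ?thesis .
qed

lemma lemA:
  fixes z :: "'m::finite \<Rightarrow> 'p::finite \<Rightarrow> complex"
  shows "(\<Sum>p\<in>UNIV. \<Sum>q\<in>UNIV. (\<Sum>m\<in>UNIV. z m p * cnj (z m q)) * \<sigma> q p) = (\<Sum>m\<in>UNIV. sesq (z m) \<sigma> (z m))"
proof -
  have "(\<Sum>p\<in>UNIV. \<Sum>q\<in>UNIV. (\<Sum>m\<in>UNIV. z m p * cnj (z m q)) * \<sigma> q p)
      = (\<Sum>p\<in>UNIV. \<Sum>q\<in>UNIV. (\<Sum>m\<in>UNIV. z m p * cnj (z m q) * \<sigma> q p))"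
    by (simp add: sum_distrib_right)
  also have "\<dots> = (\<Sum>m\<in>UNIV. \<Sum>p\<in>UNIV. \<Sum>q\<in>UNIV. z m p * cnj (z m q) * \<sigma> q p)"
    by (rule sum3_swap)
  also have "\<dots> = (\<Sum>m\<in>UNIV. sesq (z m) \<sigma> (z m))"
  proof (intro sum.cong refl)
    fix m
    have "(\<Sum>p\<in>UNIV. \<Sum>q\<in>UNIV. z m p * cnj (z m q) * \<sigma> q p) = (\<Sum>q\<in>UNIV. \<Sum>p\<in>UNIV. z m p * cnj (z m q) * \<sigma> q p)"
      by (rule sum.swap)
    also have "\<dots> = sesq (z m) \<sigma> (z m)" unfolding sesq_def
      by (intro sum.cong refl) (simp only: mult_ac)
    finally show "(\<Sum>p\<in>UNIV. \<Sum>q\<in>UNIV. z m p * cnj (z m q) * \<sigma> q p) = sesq (z m) \<sigma> (z m)" .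
  qed
  finally show ?thesis .
qed

lemma lemB:
  fixes E :: "('s::finite) op" and Z :: "('a::finite) op" and \<sigma> :: "('s \<times> 'a) op"
  shows "trace (mmult E (ptrace_A (mmult (tensor_op idop Z) \<sigma>))) = (\<Sum>p\<in>UNIV. \<Sum>q\<in>UNIV. tensor_op E Z p q * \<sigma> q p)"
proof -
  have pt: "ptrace_A (mmult (tensor_op idop Z) \<sigma>) j i = (\<Sum>a\<in>UNIV. \<Sum>b\<in>UNIV. Z a b * \<sigma> (j, b) (i, a))" for j i
  proof -
    have "ptrace_A (mmult (tensor_op idop Z) \<sigma>) j i = (\<Sum>a\<in>UNIV. \<Sum>k\<in>UNIV. \<Sum>b\<in>UNIV. idop j k * Z a b * \<sigma> (k, b) (i, a))"
      unfolding ptrace_A_def mmult_def tensor_op_def by (simp add: sum_pairs)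
    also have "\<dots> = (\<Sum>a\<in>UNIV. \<Sum>b\<in>UNIV. Z a b * \<sigma> (j, b) (i, a))"
    proof (intro sum.cong refl)
      fix a
      have "(\<Sum>k\<in>UNIV. \<Sum>b\<in>UNIV. idop j k * Z a b * \<sigma> (k, b) (i, a)) = (\<Sum>k\<in>UNIV. if k = j then (\<Sum>b\<in>UNIV. Z a b * \<sigma> (j, b) (i, a)) else 0)"
        by (intro sum.cong refl) (simp add: idop_def)
      then show "(\<Sum>k\<in>UNIV. \<Sum>b\<in>UNIV. idop j k * Z a b * \<sigma> (k, b) (i, a)) = (\<Sum>b\<in>UNIV. Z a b * \<sigma> (j, b) (i, a))"
        by simp
    qed
    finally show ?thesis .
  qed
  have "trace (mmult E (ptrace_A (mmult (tensor_op idop Z) \<sigma>))) = (\<Sum>i\<in>UNIV. \<Sum>j\<in>UNIV. E i j * (\<Sum>a\<in>UNIV. \<Sum>b\<in>UNIV. Z a b * \<sigma> (j, b) (i, a)))"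
  proof -
    have tr: "trace (mmult E X) = (\<Sum>i\<in>UNIV. \<Sum>j\<in>UNIV. E i j * X j i)" for X :: "'s op"
      by (simp add: trace_def mmult_def)
    show ?thesis unfolding tr pt ..
  qed
  also have "\<dots> = (\<Sum>i\<in>UNIV. \<Sum>j\<in>UNIV. \<Sum>a\<in>UNIV. \<Sum>b\<in>UNIV. E i j * Z a b * \<sigma> (j, b) (i, a))"
    by (simp add: sum_distrib_left mult.assoc)
  also have "\<dots> = (\<Sum>i\<in>UNIV. \<Sum>a\<in>UNIV. \<Sum>j\<in>UNIV. \<Sum>b\<in>UNIV. E i j * Z a b * \<sigma> (j, b) (i, a))"
    by (intro sum.cong refl) (rule sum.swap)
  also have "\<dots> = (\<Sum>p\<in>UNIV. \<Sum>q\<in>UNIV. tensor_op E Z p q * \<sigma> q p)"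
    by (simp add: sum_pairs tensor_op_def)
  finally show ?thesis .
qed

lemma lemC:
  fixes u :: "'s::finite \<Rightarrow> 's \<Rightarrow> complex" and w :: "'a::finite \<Rightarrow> 'a \<Rightarrow> complex"
  shows "tensor_op (\<lambda>i j. \<Sum>k\<in>UNIV. u k i * cnj (u k j)) (\<lambda>a b. \<Sum>l\<in>UNIV. w l a * cnj (w l b)) p q
    = (\<Sum>m\<in>UNIV. (\<lambda>(j, b). u (fst m) j * w (snd m) b) p * cnj ((\<lambda>(j, b). u (fst m) j * w (snd m) b) q))"
proof -
  obtain i a where p: "p = (i, a)" by (cases p)
  obtain j b where q: "q = (j, b)" by (cases q)
  have "(\<Sum>m\<in>UNIV. (\<lambda>(j, b). u (fst m) j * w (snd m) b) p * cnj ((\<lambda>(j, b). u (fst m) j * w (snd m) b) q))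
     = (\<Sum>k\<in>UNIV. \<Sum>l\<in>UNIV. (u k i * cnj (u k j)) * (w l a * cnj (w l b)))"
    unfolding sum_pairs p q by (simp add: mult_ac)
  also have "\<dots> = (\<Sum>k\<in>UNIV. u k i * cnj (u k j)) * (\<Sum>l\<in>UNIV. w l a * cnj (w l b))"
    by (simp add: sum_product)
  finally show ?thesis unfolding p q tensor_op_def by simp
qed



lemma sesq_diag: "sesq v (\<lambda>i j. if i = j then c else 0) w = c * (\<Sum>i\<in>UNIV. cnj (v i) * w i)"
proof -
  have "sesq v (\<lambda>i j. if i = j then c else 0) w = (\<Sum>i\<in>UNIV. c * (cnj (v i) * w i))"
    unfolding sesq_def
  proof (intro sum.cong refl)
    fix i
    have "(\<Sum>j\<in>UNIV. cnj (v i) * (if i = j then c else 0) * w j) = (\<Sum>j\<in>UNIV. if j = i then c * (cnj (v i) * w i) else 0)"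
      by (intro sum.cong refl) auto
    then show "(\<Sum>j\<in>UNIV. cnj (v i) * (if i = j then c else 0) * w j) = c * (cnj (v i) * w i)" by simp
  qed
  then show ?thesis by (simp add: sum_distrib_left)
qed

lemma normsq_sum:
  fixes v :: "'n::finite \<Rightarrow> complex"
  shows "(\<Sum>i\<in>UNIV. cnj (v i) * v i) = of_real (\<Sum>i\<in>UNIV. (cmod (v i))^2)"
  unfolding of_real_sum complex_norm_square by (simp add: mult.commute)

lemma normsq_pos:
  fixes v :: "'n::finite \<Rightarrow> complex"
  assumes "v \<noteq> (\<lambda>_. 0)"
  shows "0 < (\<Sum>i\<in>UNIV. (cmod (v i))^2)"
proof -
  obtain i where "v i \<noteq> 0" using assms by auto
  then show ?thesis by (intro sum_pos2[of UNIV i]) auto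
qed

lemma maxmixed_state:
  fixes \<rho> :: "('n::finite) op"
  defines "\<rho> \<equiv> (\<lambda>i j. if i = j then complex_of_real (1 / real (card (UNIV::'n set))) else 0)"
  shows "is_state \<rho>"
proof -
  have pos: "positive_op \<rho>"
    unfolding positive_op_def \<rho>_def sesq_diag normsq_sum
    by (simp flip: of_real_mult add: sum_nonneg)
  have "trace \<rho> = (\<Sum>i\<in>(UNIV::'n set). complex_of_real (1 / real (card (UNIV::'n set))))"
    unfolding trace_def \<rho>_def by simp
  also have "\<dots> = 1" by simp
  finally show ?thesis using pos unfolding is_state_def by simp
qed

lemma sesq_tensor_diag:
  fixes \<xi> :: "('a::finite) op" and v :: "('s::finite \<times> 'a) \<Rightarrow> complex"
  shows "sesq v (tensor_op (\<lambda>i j. if i = j then c else 0) \<xi>) v = c * (\<Sum>i\<in>UNIV. sesq (\<lambda>a. v (i, a)) \<xi> (\<lambda>a. v (i, a)))"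
proof -
  have "sesq v (tensor_op (\<lambda>i j. if i = j then c else 0) \<xi>) v
      = (\<Sum>i\<in>UNIV. \<Sum>a\<in>UNIV. \<Sum>j\<in>UNIV. \<Sum>b\<in>UNIV. cnj (v (i, a)) * ((if i = j then c else 0) * \<xi> a b) * v (j, b))"
    unfolding sesq_def tensor_op_def sum_pairs by simp
  also have "\<dots> = (\<Sum>i\<in>UNIV. \<Sum>a\<in>UNIV. \<Sum>b\<in>UNIV. c * (cnj (v (i, a)) * \<xi> a b * v (i, b)))"
  proof (intro sum.cong refl)
    fix i a
    have "(\<Sum>j\<in>UNIV. \<Sum>b\<in>UNIV. cnj (v (i, a)) * ((if i = j then c else 0) * \<xi> a b) * v (j, b))
        = (\<Sum>j\<in>UNIV. if j = i then (\<Sum>b\<in>UNIV. c * (cnj (v (i, a)) * \<xi> a b * v (i, b))) else 0)"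
      by (intro sum.cong refl) (auto simp: mult_ac)
    then show "(\<Sum>j\<in>UNIV. \<Sum>b\<in>UNIV. cnj (v (i, a)) * ((if i = j then c else 0) * \<xi> a b) * v (j, b))
        = (\<Sum>b\<in>UNIV. c * (cnj (v (i, a)) * \<xi> a b * v (i, b)))" by simp
  qed
  also have "\<dots> = c * (\<Sum>i\<in>UNIV. sesq (\<lambda>a. v (i, a)) \<xi> (\<lambda>a. v (i, a)))"
    unfolding sesq_def by (simp add: sum_distrib_left)
  finally show ?thesis .
qed

lemma tensor_full_rank:
  fixes \<xi> :: "('a::finite) op" and \<rho> :: "('s::finite) op"
  defines "\<rho> \<equiv> (\<lambda>i j. if i = j then complex_of_real (1 / real (card (UNIV::'s set))) else 0)"
  assumes xi: "full_rank_state \<xi>"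
  shows "full_rank_state (tensor_op \<rho> \<xi>)"
proof -
  define c where "c = 1 / real (card (UNIV::'s set))"
  have c0: "0 < c" unfolding c_def by (simp add: finite_UNIV_card_ge_0)
  have pd: "posdef_op \<xi>" and ps: "positive_op \<xi>" and tr: "trace \<xi> = 1"
    using xi unfolding full_rank_state_def is_state_def posdef_op_def by auto
  have S: "sesq v (tensor_op \<rho> \<xi>) v = complex_of_real c * (\<Sum>i\<in>UNIV. sesq (\<lambda>a. v (i, a)) \<xi> (\<lambda>a. v (i, a)))" for v
    unfolding \<rho>_def c_def by (rule sesq_tensor_diag)
  have pos: "positive_op (tensor_op \<rho> \<xi>)"
    unfolding positive_op_def S
  proof
    fix v :: "'s \<times> 'a \<Rightarrow> complex"
    have "Im (sesq (\<lambda>a. v (i, a)) \<xi> (\<lambda>a. v (i, a))) = 0" "0 \<le> Re (sesq (\<lambda>a. v (i, a)) \<xi> (\<lambda>a. v (i, a)))" for i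
      using ps unfolding positive_op_def by auto
    then show "Im (complex_of_real c * (\<Sum>i\<in>UNIV. sesq (\<lambda>a. v (i, a)) \<xi> (\<lambda>a. v (i, a)))) = 0 \<and>
      0 \<le> Re (complex_of_real c * (\<Sum>i\<in>UNIV. sesq (\<lambda>a. v (i, a)) \<xi> (\<lambda>a. v (i, a))))"
      using c0 by (simp add: Im_sum Re_sum sum_nonneg)
  qed
  have pdef: "posdef_op (tensor_op \<rho> \<xi>)"
    unfolding posdef_op_def
  proof (intro conjI pos allI impI)
    fix v :: "'s \<times> 'a \<Rightarrow> complex"
    assume "v \<noteq> (\<lambda>_. 0)"
    then obtain i a where ia: "v (i, a) \<noteq> 0" by (metis surj_pair ext)
    have ge: "0 \<le> Re (sesq (\<lambda>a. v (i, a)) \<xi> (\<lambda>a. v (i, a)))" for i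
      using ps unfolding positive_op_def by auto
    have "(\<lambda>b. v (i, b)) \<noteq> (\<lambda>_. 0)" using ia by (metis)
    then have gt: "0 < Re (sesq (\<lambda>a. v (i, a)) \<xi> (\<lambda>a. v (i, a)))"
      using pd unfolding posdef_op_def by blast
    have "0 < (\<Sum>i\<in>UNIV. Re (sesq (\<lambda>a. v (i, a)) \<xi> (\<lambda>a. v (i, a))))"
      by (rule sum_pos2[of UNIV i]) (use ge gt in auto)
    then show "0 < Re (sesq v (tensor_op \<rho> \<xi>) v)"
      unfolding S using c0 by (simp add: Re_sum)
  qed
  have "trace (tensor_op \<rho> \<xi>) = (\<Sum>i\<in>(UNIV::'s set). \<Sum>a\<in>UNIV. \<rho> i i * \<xi> a a)"
    unfolding trace_def tensor_op_def sum_pairs by simp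
  also have "\<dots> = (\<Sum>i\<in>(UNIV::'s set). complex_of_real c * trace \<xi>)"
    unfolding trace_def \<rho>_def c_def by (simp add: sum_distrib_left)
  also have "\<dots> = 1" using tr unfolding c_def by simp
  finally show ?thesis using pos pdef unfolding full_rank_state_def is_state_def posdef_op_def by simp
qed

lemma trace_pos:
  fixes M :: "('n::finite) op"
  assumes "positive_op M" "M \<noteq> (\<lambda>_ _. 0)"
  shows "0 < Re (trace M)"
proof -
  have "\<exists>i. M i i \<noteq> 0"
  proof (rule ccontr)
    assume "\<not> (\<exists>i. M i i \<noteq> 0)"
    then have "M j i = 0" for i j using zero_col[OF assms(1)] by blast
    then show False using assms(2) by (auto simp: fun_eq_iff)
  qed
  then obtain i where i: "M i i \<noteq> 0" by blast
  have gt: "0 < Re (M i i)" using pos_diag[OF assms(1), of i] i by (simp add: complex_eq_iff)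
  have ge: "0 \<le> Re (M k k)" for k using pos_diag[OF assms(1), of k] by simp
  have "0 < (\<Sum>k\<in>UNIV. Re (M k k))" by (rule sum_pos2[of UNIV i]) (use ge gt in auto)
  then show ?thesis unfolding trace_def by (simp add: Re_sum)
qed



theorem theorem3:
  fixes E :: "'x::finite \<Rightarrow> ('s::finite) op"
    and \<xi> :: "('a::finite) op"
    and Ech :: "('s \<times> 'a) op \<Rightarrow> ('s \<times> 'a) op"
    and Z :: "'x \<Rightarrow> 'a op"
  assumes "card (UNIV :: 's set) \<ge> 2"
    and "observable E"
    and "nontrivial_observable E"
    and "third_law_scheme \<xi> Ech Z"
    and "E_instrument E (implemented_instrument \<xi> Ech Z)"
  shows "\<not> repeatable E (implemented_instrument \<xi> Ech Z)"
proof
  assume rep: "repeatable E (implemented_instrument \<xi> Ech Z)"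
  have Enz: "E x \<noteq> (\<lambda>_ _. 0)" and Epos: "positive_op (E x)" for x
    using assms(2) unfolding observable_def by auto
  have Esum: "(\<lambda>i j. \<Sum>x\<in>UNIV. E x i j) = idop" using assms(2) unfolding observable_def by auto
  have Zpos: "positive_op (Z x)" for x using assms(4) unfolding third_law_scheme_def measurement_scheme_def by auto
  have xifr: "full_rank_state \<xi>" and tl: "third_law_channel Ech"
    using assms(4) unfolding third_law_scheme_def by auto
  have inst: "trace (implemented_instrument \<xi> Ech Z x \<rho>) = trace (mmult (E x) \<rho>)" if "is_state \<rho>" for x \<rho>
    using assms(5) that unfolding E_instrument_def by auto
  obtain x where xnt: "\<not> (\<exists>c. E x = (\<lambda>i j. c * idop i j))" using assms(3) unfolding nontrivial_observable_def by auto
  obtain y where yx: "y \<noteq> x"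
  proof (rule ccontr)
    assume "\<not> thesis"
    then have all: "\<And>y. y = x" using that by blast
    then have U: "(UNIV::'x set) = {x}" by auto
    have "(\<Sum>x'\<in>UNIV. E x' i j) = E x i j" for i j
    proof -
      have "(\<Sum>x'\<in>{x}. E x' i j) = E x i j" by simp
      then show ?thesis by (simp only: U)
    qed
    then have "E x = idop" using Esum by (metis (no_types, lifting) ext)
    then show False using xnt by (auto simp: fun_eq_iff)
  qed
  define \<rho> :: "'s op" where "\<rho> = (\<lambda>i j. if i = j then complex_of_real (1 / real (card (UNIV::'s set))) else 0)"
  have rs: "is_state \<rho>" unfolding \<rho>_def by (rule maxmixed_state)
  have tfr: "full_rank_state (tensor_op \<rho> \<xi>)" unfolding \<rho>_def by (rule tensor_full_rank[OF xifr])
  define \<sigma> where "\<sigma> = Ech (tensor_op \<rho> \<xi>)"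
  have sfr: "full_rank_state \<sigma>" using tl tfr unfolding third_law_channel_def \<sigma>_def by auto
  then have spd: "posdef_op \<sigma>" and spos: "positive_op \<sigma>" unfolding full_rank_state_def posdef_op_def by auto
  have Inst: "implemented_instrument \<xi> Ech Z x' \<rho> = ptrace_A (mmult (tensor_op idop (Z x')) \<sigma>)" for x'
    unfolding implemented_instrument_def \<sigma>_def ..
  have Znz: "Z x \<noteq> (\<lambda>_ _. 0)"
  proof
    assume Z0: "Z x = (\<lambda>_ _. 0)"
    have "implemented_instrument \<xi> Ech Z x \<rho> = (\<lambda>_ _. 0)"
      unfolding Inst Z0 by (simp add: ptrace_A_def mmult_def tensor_op_def fun_eq_iff split_def)
    then have "trace (mmult (E x) \<rho>) = 0" using inst[OF rs, of x] by (simp add: trace_def)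
    moreover have "trace (mmult (E x) \<rho>) = complex_of_real (1 / real (card (UNIV::'s set))) * trace (E x)"
    proof -
      have "trace (mmult (E x) \<rho>) = (\<Sum>i\<in>UNIV. complex_of_real (1 / real (card (UNIV::'s set))) * E x i i)"
        unfolding trace_def mmult_def
      proof (intro sum.cong refl)
        fix i
        have "(\<Sum>k\<in>UNIV. E x i k * \<rho> k i) = (\<Sum>k\<in>UNIV. if k = i then complex_of_real (1 / real (card (UNIV::'s set))) * E x i i else 0)"
          unfolding \<rho>_def by (intro sum.cong refl) auto
        then show "(\<Sum>k\<in>UNIV. E x i k * \<rho> k i) = complex_of_real (1 / real (card (UNIV::'s set))) * E x i i" by simp
      qed
      then show ?thesis unfolding trace_def by (simp add: sum_distrib_left)
    qed
    moreover have "0 < Re (trace (E x))" by (rule trace_pos[OF Epos Enz])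
    moreover have "0 < real (card (UNIV::'s set))" by (simp add: finite_UNIV_card_ge_0)
    ultimately show False by simp
  qed
  obtain u :: "'s \<Rightarrow> 's \<Rightarrow> complex" where u: "E y = (\<lambda>i j. \<Sum>k\<in>UNIV. u k i * cnj (u k j))"
    using decomp[OF Epos[of y]] by blast
  obtain w :: "'a \<Rightarrow> 'a \<Rightarrow> complex" where w: "Z x = (\<lambda>i j. \<Sum>k\<in>UNIV. w k i * cnj (w k j))"
    using decomp[OF Zpos[of x]] by blast
  obtain k0 i0 where ki: "u k0 i0 \<noteq> 0"
  proof (rule ccontr)
    assume "\<not> thesis"
    then have "u k i = 0" for k i using that by blast
    then show False using u Enz[of y] by (simp add: fun_eq_iff)
  qed
  obtain l0 a0 where la: "w l0 a0 \<noteq> 0"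
  proof (rule ccontr)
    assume "\<not> thesis"
    then have "w k i = 0" for k i using that by blast
    then show False using w Znz by (simp add: fun_eq_iff)
  qed
  define zz where "zz = (\<lambda>m::'s \<times> 'a. \<lambda>(j, b). u (fst m) j * w (snd m) b)"
  have "trace (mmult (E y) (implemented_instrument \<xi> Ech Z x \<rho>)) = 0"
    using rep rs yx unfolding repeatable_def by auto
  moreover have "trace (mmult (E y) (implemented_instrument \<xi> Ech Z x \<rho>)) = (\<Sum>m\<in>UNIV. sesq (zz m) \<sigma> (zz m))"
  proof -
    have "trace (mmult (E y) (implemented_instrument \<xi> Ech Z x \<rho>)) = (\<Sum>p\<in>UNIV. \<Sum>q\<in>UNIV. tensor_op (E y) (Z x) p q * \<sigma> q p)"
      unfolding Inst by (rule lemB)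
    also have "\<dots> = (\<Sum>p\<in>UNIV. \<Sum>q\<in>UNIV. (\<Sum>m\<in>UNIV. zz m p * cnj (zz m q)) * \<sigma> q p)"
      unfolding u w lemC zz_def ..
    also have "\<dots> = (\<Sum>m\<in>UNIV. sesq (zz m) \<sigma> (zz m))" by (rule lemA)
    finally show ?thesis .
  qed
  moreover have "0 < Re (\<Sum>m\<in>UNIV. sesq (zz m) \<sigma> (zz m))"
  proof -
    have ge: "0 \<le> Re (sesq (zz m) \<sigma> (zz m))" for m using spos unfolding positive_op_def by auto
    have "zz (k0, l0) (i0, a0) \<noteq> 0" unfolding zz_def using ki la by simp
    then have "zz (k0, l0) \<noteq> (\<lambda>_. 0)" by auto
    then have gt: "0 < Re (sesq (zz (k0, l0)) \<sigma> (zz (k0, l0)))" using spd unfolding posdef_op_def by blast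
    have "0 < (\<Sum>m\<in>UNIV. Re (sesq (zz m) \<sigma> (zz m)))" by (rule sum_pos2[of UNIV "(k0, l0)"]) (use ge gt in auto)
    then show ?thesis by (simp add: Re_sum)
  qed
  ultimately show False by simp
qed

end
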